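(* Let $p$ be an odd prime and let $f:\mathbb{F}_{p^{2k}}\to\mathbb{F}_p$ satisfy Condition A with sign $\epsilon$. Let $D=\{x\in\mathbb{F}_{p^{2k}}^*: f(x)=0\}$. Then $D$ is a $(v,d,\lambda_1,\lambda_2)$ partial difference set in the additive group of $\mathbb{F}_{p^{2k}}$, where $v=p^{2k}$, $d=(p^k-\epsilon)(p^{k-1}+\epsilon)$, $\lambda_1=(p^{k-1}+\epsilon)^2-3\epsilon(p^{k-1}+\epsilon)+\epsilon p^k$, $\lambda_2=(p^{k-1}+\epsilon)p^{k-1}$. Consequently the Cayley graph on $\mathbb{F}_{p^{2k}}$ in which $x,y$ are adjacent iff $x-y\in D$ is a strongly regular graph with these parameters.
   Context: Let $\zeta_p$ be a primitive complex $p$-th root of unity and $\mathrm{tr}$ the absolute trace from $\mathbb{F}_{p^{2k}}$ to $\mathbb{F}_p$. For $f:\mathbb{F}_{p^{2k}}\to\mathbb{F}_p$ the Walsh transform is $\mathcal{W}_f(b)=\sum_{x\in\mathbb{F}_{p^{2k}}}\zeta_p^{f(x)+\mathrm{tr}(bx)}$. Condition A: $p$ is an odd prime and $f:\mathbb{F}_{p^{2k}}\to\mathbb{F}_p$ satisfies $f(0)=0$, $f(-x)=f(x)$ for all $x$; there is an integer $l$ with $\gcd(l-1,p-1)=1$ such that $f(\alpha x)=\alpha^l f(x)$ for all $\alpha\in\mathbb{F}_p$, $x\in\mathbb{F}_{p^{2k}}$; and there exist a constant $\epsilon\in\{1,-1\}$ and a function $f^*:\mathbb{F}_{p^{2k}}\to\mathbb{F}_p$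 such that $\mathcal{W}_f(b)=\epsilon p^k\zeta_p^{f^*(b)}$ for all $b\in\mathbb{F}_{p^{2k}}$. A $d$-subset $D$ of a finite abelian group $G$ (written additively, of order $v$) with $0\notin D$ is a $(v,d,\lambda,\mu)$ partial difference set (PDS) if every nonzero element of $D$ can be written as $g-h$ with $g,h\in D$ in exactly $\lambda$ ways, and every nonzero element of $G\setminus D$ can be written so in exactly $\mu$ ways. *)

theory Defs
  imports Complex_Main "HOL-Computational_Algebra.Primes"
begin

definition prime_subfield :: "nat \<Rightarrow> 'a::field set" where
  "prime_subfield p = {of_nat i | i. i < p}"

text \<open>Index in {0..p-1} of an element of the prime subfield (exponent of zeta_p).\<close>
definition fp_idx :: "nat \<Rightarrow> 'a::field \<Rightarrow> nat" where
  "fp_idx p y = (THE i. i < p \<and> of_nat i = y)"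

definition abs_trace :: "nat \<Rightarrow> nat \<Rightarrow> 'a::field \<Rightarrow> 'a" where
  "abs_trace p n x = (\<Sum>i<n. x ^ (p ^ i))"

definition walsh :: "nat \<Rightarrow> nat \<Rightarrow> complex \<Rightarrow> ('a::{field,finite} \<Rightarrow> 'a) \<Rightarrow> 'a \<Rightarrow> complex" where
  "walsh p n zeta f b = (\<Sum>x\<in>UNIV. zeta ^ fp_idx p (f x + abs_trace p n (b * x)))"

definition diff_count :: "'a::ab_group_add set \<Rightarrow> 'a \<Rightarrow> nat" where
  "diff_count D x = card {(g, h). g \<in> D \<and> h \<in> D \<and> g - h = x}"

definition is_pds :: "'a::{ab_group_add,finite} set \<Rightarrow> int \<Rightarrow> int \<Rightarrow> int \<Rightarrow> int \<Rightarrow> bool" where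
  "is_pds D v d lam mu \<longleftrightarrow>
     0 \<notin> D \<and> int (card (UNIV::'a set)) = v \<and> int (card D) = d \<and>
     (\<forall>x\<in>D. int (diff_count D x) = lam) \<and>
     (\<forall>x. x \<noteq> 0 \<and> x \<notin> D \<longrightarrow> int (diff_count D x) = mu)"

definition is_srg :: "('a::finite \<Rightarrow> 'a \<Rightarrow> bool) \<Rightarrow> int \<Rightarrow> int \<Rightarrow> int \<Rightarrow> int \<Rightarrow> bool" where
  "is_srg E v d lam mu \<longleftrightarrow>
     (\<forall>x y. E x y \<longleftrightarrow> E y x) \<and> (\<forall>x. \<not> E x x) \<and>
     int (card (UNIV::'a set)) = v \<and>
     (\<forall>x. int (card {y. E x y}) = d) \<and>
     (\<forall>x y. E x y \<longrightarrow> int (card {z. E x z \<and> E y z}) = lam) \<and>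
     (\<forall>x y. x \<noteq> y \<and> \<not> E x y \<longrightarrow> int (card {z. E x z \<and> E y z}) = mu)"

end

theory Submission
  imports Defs "Berlekamp_Zassenhaus.Factor_Bound"
begin

interpretation rc: map_poly_idom_hom "of_rat :: rat \<Rightarrow> complex" ..

definition cycp :: "nat \<Rightarrow> 'a::comm_ring_1 poly" where "cycp n = (\<Sum>i<n. monom 1 i)"

lemma coeff_cycp: "coeff (cycp n) i = (if i < n then 1 else 0)"
  unfolding cycp_def by (simp add: coeff_sum coeff_monom)

lemma degree_cycp: "n > 0 \<Longrightarrow> degree (cycp n :: 'a::comm_ring_1 poly) = n - 1"
proof (rule antisym)
  assume "n > 0"
  show "degree (cycp n :: 'a poly) \<le> n - 1" by (rule degree_le) (auto simp: coeff_cycp)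
  show "n - 1 \<le> degree (cycp n :: 'a poly)" by (rule le_degree) (use \<open>n > 0\<close> in \<open>simp add: coeff_cycp\<close>)
qed

lemma poly_cycp: "poly (cycp n) x = (\<Sum>i<n. x^i)" by (simp add: cycp_def poly_sum poly_monom)

lemma geom_sum_mult: "(\<Sum>i<n. (x::'a::comm_ring_1)^i) * (x - 1) = x^n - 1"
  by (induct n) (simp_all add: algebra_simps)

lemma of_int_cycp: "of_int_poly (cycp n) = cycp n"
  by (rule poly_eqI) (simp add: coeff_map_poly coeff_cycp)

definition psi :: "nat \<Rightarrow> int poly" where "psi n = pcompose (cycp n) [:1,1:]"

lemma psi_shift: "psi n * [:0,1:] = [:1,1:]^n - 1"
proof -
  have "poly (psi n * [:0,1:]) x = poly ([:1,1:]^n - 1) x" for x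
  proof -
    have "poly (psi n * [:0,1:]) x = (\<Sum>i<n. (1+x)^i) * ((1 + x) - 1)"
      by (simp add: psi_def poly_pcompose poly_cycp)
    also have "\<dots> = (1+x)^n - 1" by (rule geom_sum_mult)
    finally show ?thesis by simp
  qed
  thus ?thesis by (intro poly_eq_poly_eq_iff[THEN iffD1]) auto
qed

lemma coeff_psi: "coeff (psi n) i = int (n choose Suc i)"
proof -
  have "coeff (psi n) i = coeff (psi n * [:0,1:]) (Suc i)" by simp
  also have "\<dots> = coeff ([:1,1:]^n) (Suc i)"
    using arg_cong[OF psi_shift, of "\<lambda>q. coeff q (Suc i)" n] by simp
  also have "\<dots> = int (n choose Suc i)"
  proof (cases "Suc i \<le> n")
    case True thus ?thesis by (subst coeff_linear_poly_power) auto
  next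
    case False
    hence "coeff ([:1::int,1:]^n) (Suc i) = 0"
      using degree_linear_power[of "1::int" n] False by (intro coeff_eq_0) simp
    thus ?thesis using False by simp
  qed
  finally show ?thesis .
qed

lemma eisenstein_aux:
  fixes A B :: "int poly" and p :: nat
  assumes pr: "prime p" and AB: "A * B = Psi"
    and c0: "coeff Psi 0 = int p" and cl: "coeff Psi (degree Psi) = 1"
    and cm: "\<And>i. i < degree Psi \<Longrightarrow> int p dvd coeff Psi i"
    and dA: "degree A < degree Psi" and dB: "0 < degree B"
    and pa0: "int p dvd coeff A 0"
  shows False
proof -
  have prI: "prime (int p)" using pr by simp
  have Psi0: "Psi \<noteq> 0" using cl by auto
  have A0: "A \<noteq> 0" "B \<noteq> 0" using AB Psi0 by auto
  have dPsi: "degree Psi = degree A + degree B" unfolding AB[symmetric] using A0 by (simp add: degree_mult_eq)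
  have lead: "coeff A (degree A) * coeff B (degree B) = 1"
    using cl AB dPsi by (metis coeff_mult_degree_sum)
  hence nA: "\<not> int p dvd coeff A (degree A)"
    using prI by (metis dvd_mult2 not_prime_unit dvd_1_left zdvd1_eq)
  have "coeff A 0 * coeff B 0 = int p" using AB c0 by (metis coeff_mult_0)
  moreover obtain t where t: "coeff A 0 = int p * t" using pa0 by (auto simp: dvd_def)
  ultimately have "int p * (t * coeff B 0) = int p * 1" by (simp add: mult.assoc)
  hence "t * coeff B 0 = 1" using pr by (simp add: prime_gt_0_nat)
  hence "coeff B 0 dvd 1" by (metis dvd_triv_right)
  hence nb0: "\<not> int p dvd coeff B 0" using prI by (meson dvd_trans not_prime_unit)
  define r where "r = (LEAST i. \<not> int p dvd coeff A i)"
  have rex: "\<not> int p dvd coeff A r" unfolding r_def by (rule LeastI[of _ "degree A"]) (rule nA)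
  have rle: "r \<le> degree A" unfolding r_def by (rule Least_le) (rule nA)
  have rlt: "\<And>i. i < r \<Longrightarrow> int p dvd coeff A i" unfolding r_def using not_less_Least by blast
  have "r < degree Psi" using rle dB dPsi by simp
  hence "int p dvd coeff Psi r" by (rule cm)
  moreover have "coeff Psi r = (\<Sum>i<r. coeff A i * coeff B (r - i)) + coeff A r * coeff B 0"
    unfolding AB[symmetric] coeff_mult by (simp add: lessThan_Suc_atMost[symmetric])
  moreover have "int p dvd (\<Sum>i<r. coeff A i * coeff B (r - i))"
    by (rule dvd_sum) (simp add: rlt)
  ultimately have "int p dvd coeff A r * coeff B 0" by (metis dvd_add_right_iff)
  thus False using prI rex nb0 by (simp add: prime_dvd_mult_iff)
qed

lemma irred_cycp: assumes pr: "prime p" shows "irreducible\<^sub>d (cycp p :: int poly)"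
proof (rule irreducible\<^sub>dI)
  have p2: "p \<ge> 2" using pr by (rule prime_ge_2_nat)
  show "0 < degree (cycp p :: int poly)" using p2 by (simp add: degree_cycp)
  fix q r :: "int poly"
  assume dq: "0 < degree q" "degree q < degree (cycp p :: int poly)"
    and dr: "0 < degree r" "degree r < degree (cycp p :: int poly)" and qr: "cycp p = q * r"
  define A where "A = pcompose q [:1,1:]"
  define B where "B = pcompose r [:1,1:]"
  have AB: "A * B = psi p" unfolding A_def B_def psi_def qr by (simp add: pcompose_mult)
  have dA: "degree A = degree q" unfolding A_def by (simp add: degree_pcompose)
  have dB: "degree B = degree r" unfolding B_def by (simp add: degree_pcompose)
  have dpsi: "degree (psi p) = p - 1" using p2 by (simp add: psi_def degree_pcompose degree_cycp)
  have dc: "degree (cycp p :: int poly) = p - 1" using p2 by (simp add: degree_cycp)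
  have c0: "coeff (psi p) 0 = int p" by (simp add: coeff_psi)
  have cl: "coeff (psi p) (degree (psi p)) = 1" using p2 by (simp add: dpsi coeff_psi)
  have cm: "int p dvd coeff (psi p) i" if "i < degree (psi p)" for i
  proof -
    have "p dvd (p choose Suc i)" using that dpsi p2 pr by (intro dvd_choose_prime) auto
    thus ?thesis by (simp add: coeff_psi)
  qed
  have prI: "prime (int p)" using pr by simp
  have "coeff A 0 * coeff B 0 = int p" using AB c0 by (metis coeff_mult_0)
  hence "int p dvd coeff A 0 * coeff B 0" by simp
  hence "int p dvd coeff A 0 \<or> int p dvd coeff B 0" using prI by (simp add: prime_dvd_mult_iff)
  thus False
  proof
    assume "int p dvd coeff A 0"
    from eisenstein_aux[OF pr AB c0 cl cm _ _ this] show False using dA dB dq dr dpsi dc by simp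
  next
    assume "int p dvd coeff B 0"
    from eisenstein_aux[OF pr _ c0 cl cm _ _ this, of A] show False
      using AB dA dB dq dr dpsi dc by (simp add: mult.commute)
  qed
qed

lemma cyc_indep:
  fixes z :: complex and c :: "nat \<Rightarrow> int"
  assumes pr: "prime p" and z1: "z^p = 1" and zn: "z \<noteq> 1"
    and s: "(\<Sum>i<p. of_int (c i) * z^i) = 0" and i: "i < p"
  shows "c i = c 0"
proof -
  have p2: "p \<ge> 2" using pr by (rule prime_ge_2_nat)
  have zs: "(\<Sum>i<p. z^i) = 0"
  proof -
    have "(\<Sum>i<p. z^i) * (z - 1) = 0" using z1 by (simp add: geom_sum_mult)
    thus ?thesis using zn by simp
  qed
  define P :: "rat poly" where "P = (\<Sum>j<p - 1. monom (of_int (c j - c (p-1))) j)"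
  have coeffP: "coeff P j = (if j < p - 1 then of_int (c j - c (p-1)) else 0)" for j
    unfolding P_def by (simp add: coeff_sum coeff_monom)
  have mapP: "map_poly (of_rat :: rat \<Rightarrow> complex) P = (\<Sum>j<p - 1. monom (of_int (c j - c (p-1))) j)"
    by (rule poly_eqI) (simp add: coeff_map_poly coeffP coeff_sum coeff_monom of_rat_of_int_eq of_rat_diff)
  have evalP: "poly (map_poly (of_rat :: rat \<Rightarrow> complex) P) z = 0"
  proof -
    have "poly (map_poly (of_rat :: rat \<Rightarrow> complex) P) z = (\<Sum>j<p - 1. of_int (c j - c (p-1)) * z^j)"
      by (simp add: mapP poly_sum poly_monom)
    also have "\<dots> = (\<Sum>j<p. of_int (c j - c (p-1)) * z^j)"
    proof -
      have "{..<p} = insert (p - 1) {..<p-1}" using p2 by auto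
      thus ?thesis by simp
    qed
    also have "\<dots> = (\<Sum>j<p. of_int (c j) * z^j) - of_int (c (p-1)) * (\<Sum>j<p. z^j)"
      by (simp add: algebra_simps sum_subtractf sum_distrib_left sum_distrib_right)
    also have "\<dots> = 0" using s zs by simp
    finally show ?thesis .
  qed
  have "P = 0"
  proof (rule ccontr)
    assume P0: "P \<noteq> 0"
    define Phi where "Phi = (of_int_poly (cycp p :: int poly) :: rat poly)"
    have irr: "irreducible\<^sub>d Phi" unfolding Phi_def by (rule irreducible\<^sub>d_int_rat[OF irred_cycp[OF pr]])
    have PhiE: "Phi = cycp p" unfolding Phi_def by (rule of_int_cycp)
    have dPhi: "degree Phi = p - 1" using p2 by (simp add: PhiE degree_cycp)
    have Phi0: "Phi \<noteq> 0" using irr by auto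
    have dP: "degree P < p - 1"
    proof -
      have "degree P \<le> p - 2" by (rule degree_le) (auto simp: coeffP)
      thus ?thesis using p2 by linarith
    qed
    define g where "g = gcd P Phi"
    have gP: "g dvd P" and gPhi: "g dvd Phi" unfolding g_def by auto
    then obtain h where Phigh: "Phi = g * h" by (auto simp: dvd_def)
    have g0: "g \<noteq> 0" and h0: "h \<noteq> 0" using Phi0 Phigh by auto
    have dsum: "degree Phi = degree g + degree h" using Phigh g0 h0 by (simp add: degree_mult_eq)
    have "degree g \<le> degree P" using gP P0 by (rule dvd_imp_degree_le)
    hence dg: "degree g < degree Phi" using dP dPhi by linarith
    have "degree g = 0"
    proof (rule ccontr)
      assume "degree g \<noteq> 0"
      hence "degree h < degree Phi" using dsum by linarith
      thus False using irreducible\<^sub>dD(2)[OF irr dg] Phigh by blast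
    qed
    then obtain a where ga: "g = [:a:]" by (metis degree_eq_zeroE)
    have a0: "a \<noteq> 0" using g0 ga by auto
    define u where "u = fst (bezout_coefficients P Phi)"
    define v where "v = snd (bezout_coefficients P Phi)"
    have bez: "u * P + v * Phi = g" unfolding u_def v_def g_def by (rule bezout_coefficients_fst_snd)
    have "poly (map_poly (of_rat :: rat \<Rightarrow> complex) (u * P + v * Phi)) z = 0"
    proof -
      have "map_poly (of_rat :: rat \<Rightarrow> complex) Phi = cycp p"
        by (rule poly_eqI) (simp add: PhiE coeff_map_poly coeff_cycp)
      hence "poly (map_poly (of_rat :: rat \<Rightarrow> complex) Phi) z = 0" using zs by (simp add: poly_cycp)
      thus ?thesis using evalP by (simp add: rc.hom_mult rc.hom_add)
    qed
    moreover have "poly (map_poly (of_rat :: rat \<Rightarrow> complex) g) z \<noteq> 0" using a0 by (simp add: ga)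
    ultimately show False using bez by simp
  qed
  hence cj: "c j = c (p - 1)" if "j < p - 1" for j using coeffP[of j] that by (simp add: poly_eq_iff)
  have "c i = c (p - 1)" using cj[of i] i by (cases "i = p - 1") auto
  moreover have "c 0 = c (p - 1)" using cj[of 0] p2 by auto
  ultimately show ?thesis by simp
qed




lemma sum_fiber:
  fixes phi :: "'b \<Rightarrow> nat" and h :: "nat \<Rightarrow> 'c::comm_ring_1"
  assumes "finite A" "\<And>x. x \<in> A \<Longrightarrow> phi x < m"
  shows "(\<Sum>x\<in>A. h (phi x)) = (\<Sum>i<m. of_nat (card {x\<in>A. phi x = i}) * h i)"
proof -
  have "(\<Sum>x\<in>A. h (phi x)) = (\<Sum>x\<in>A. \<Sum>i<m. (if phi x = i then h i else 0))"
    using assms(2) by (intro sum.cong) (auto simp: sum.delta)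
  also have "\<dots> = (\<Sum>i<m. \<Sum>x\<in>A. (if phi x = i then h i else 0))" by (rule sum.swap)
  also have "\<dots> = (\<Sum>i<m. of_nat (card {x\<in>A. phi x = i}) * h i)"
    using assms(1) by (intro sum.cong refl) (simp add: sum.If_cases Int_def conj_commute)
  finally show ?thesis .
qed

locale bsetup =
  fixes p k :: nat and f fstar :: "'a::{field,finite} \<Rightarrow> 'a" and l :: int
    and zeta :: complex and eps :: int
  assumes p_prime: "prime p" and p_odd: "odd p"
    and card_F: "card (UNIV::'a set) = p ^ (2 * k)"
    and char_p: "of_nat p = (0::'a)"
    and zeta_p: "zeta ^ p = 1" and zeta_1: "zeta \<noteq> 1"
    and f_vals: "\<forall>x. f x \<in> prime_subfield p"
    and f0: "f 0 = 0"
    and f_even: "\<forall>x. f (- x) = f x"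
    and l_gcd: "gcd (l - 1) (int p - 1) = 1"
    and f_hom: "\<forall>\<alpha>\<in>prime_subfield p. \<forall>x. f (\<alpha> * x) = power_int \<alpha> l * f x"
    and eps_pm: "eps \<in> {1, -1}"
    and fstar_vals: "\<forall>b. fstar b \<in> prime_subfield p"
    and bent: "\<forall>b. walsh p (2 * k) zeta f b
                  = of_int eps * of_nat (p ^ k) * zeta ^ fp_idx p (fstar b)"
begin

abbreviation "Fp \<equiv> (prime_subfield p :: 'a set)"
abbreviation "q \<equiv> p ^ (2 * k)"

lemma p2: "p \<ge> 2" using p_prime by (rule prime_ge_2_nat)
lemma p3: "p \<ge> 3" using p2 p_odd by (cases "p = 2") auto

lemma CHAR_eq: "CHAR('a) = p"
proof -
  have "CHAR('a) dvd p" using char_p by (simp add: of_nat_eq_0_iff_char_dvd)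
  moreover have "CHAR('a) \<noteq> 1" using of_nat_eq_0_iff_char_dvd[of 1, where 'a='a] by auto
  ultimately show ?thesis using p_prime by (auto simp: prime_nat_iff)
qed

lemma of_nat_eq_iff_le: "a \<le> b \<Longrightarrow> (of_nat a :: 'a) = of_nat b \<longleftrightarrow> a mod p = b mod p"
proof -
  assume ab: "a \<le> b"
  have "(of_nat a :: 'a) = of_nat b \<longleftrightarrow> (of_nat b - of_nat a :: 'a) = 0" by (metis right_minus_eq)
  also have "\<dots> \<longleftrightarrow> (of_nat (b - a) :: 'a) = 0"
    using ab by (simp add: of_nat_diff)
  also have "\<dots> \<longleftrightarrow> p dvd (b - a)" by (simp add: of_nat_eq_0_iff_char_dvd CHAR_eq)
  also have "\<dots> \<longleftrightarrow> a mod p = b mod p" by (metis mod_eq_dvd_iff_nat[OF ab])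
  finally show ?thesis .
qed

lemma of_nat_eq_iff: "(of_nat a :: 'a) = of_nat b \<longleftrightarrow> a mod p = b mod p"
proof (cases "a \<le> b")
  case True thus ?thesis by (rule of_nat_eq_iff_le)
next
  case False
  hence "b \<le> a" by simp
  from of_nat_eq_iff_le[OF this] show ?thesis by (simp only: eq_ac)
qed

lemma of_nat_0_iff: "(of_nat a :: 'a) = 0 \<longleftrightarrow> p dvd a"
  using of_nat_eq_iff[of a 0] by (simp add: dvd_eq_mod_eq_0)

lemma of_nat_mod: "(of_nat (a mod p) :: 'a) = of_nat a"
  by (simp add: of_nat_eq_iff)

lemma Fp_iff: "y \<in> Fp \<longleftrightarrow> (\<exists>n. y = of_nat n)"
proof
  assume "y \<in> Fp" thus "\<exists>n. y = of_nat n" unfolding prime_subfield_def by auto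
next
  assume "\<exists>n. y = of_nat n"
  then obtain n where y: "y = of_nat n" by blast
  have "n mod p < p" using p2 by simp
  moreover have "y = of_nat (n mod p)" using y by (simp add: of_nat_mod)
  ultimately show "y \<in> Fp" unfolding prime_subfield_def by blast
qed

lemma Fp_of_nat [simp]: "(of_nat n :: 'a) \<in> Fp" using Fp_iff by blast

lemma fp_idx_of_nat: "fp_idx p (of_nat n :: 'a) = n mod p"
  unfolding fp_idx_def
proof (rule the_equality)
  show "n mod p < p \<and> (of_nat (n mod p) :: 'a) = of_nat n" using p2 by (simp add: of_nat_mod)
  fix i assume "i < p \<and> (of_nat i :: 'a) = of_nat n"
  thus "i = n mod p" by (metis of_nat_eq_iff mod_less)
qed

lemma fp_idx_lt: "y \<in> Fp \<Longrightarrow> fp_idx p y < p"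
proof -
  assume "y \<in> Fp"
  then obtain n where "y = of_nat n" unfolding Fp_iff by blast
  thus ?thesis using p2 by (simp add: fp_idx_of_nat)
qed

lemma of_nat_fp_idx: "y \<in> Fp \<Longrightarrow> (of_nat (fp_idx p y) :: 'a) = y"
proof -
  assume "y \<in> Fp"
  then obtain n where "y = of_nat n" unfolding Fp_iff by blast
  thus ?thesis by (simp add: fp_idx_of_nat of_nat_mod)
qed

lemma fp_idx_0_iff: "y \<in> Fp \<Longrightarrow> fp_idx p y = 0 \<longleftrightarrow> y = 0"
proof
  assume "y \<in> Fp" "fp_idx p y = 0"
  thus "y = 0" using of_nat_fp_idx[of y] by simp
next
  assume "y = 0"
  thus "fp_idx p y = 0" using fp_idx_of_nat[of 0] by simp
qed

lemma Fp_add: "a \<in> Fp \<Longrightarrow> b \<in> Fp \<Longrightarrow> a + b \<in> Fp"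
  unfolding Fp_iff by (auto simp flip: of_nat_add)
lemma Fp_mult: "a \<in> Fp \<Longrightarrow> b \<in> Fp \<Longrightarrow> a * b \<in> Fp"
  unfolding Fp_iff by (auto simp flip: of_nat_mult)
lemma Fp_0 [simp]: "0 \<in> Fp" using Fp_of_nat[of 0] by simp
lemma Fp_1 [simp]: "1 \<in> Fp" using Fp_of_nat[of 1] by simp

lemma frob: "(x + y :: 'a) ^ p = x ^ p + y ^ p"
  by (rule freshmans_dream) (simp_all add: CHAR_eq p_prime)

lemma frob': "(x + y :: 'a) ^ (p ^ i) = x ^ (p ^ i) + y ^ (p ^ i)"
  by (rule freshmans_dream') (simp_all add: CHAR_eq p_prime)

lemma frob_sum: "(sum g A :: 'a) ^ (p ^ i) = sum (\<lambda>j. g j ^ (p ^ i)) A"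
  by (rule freshmans_dream_sum') (simp_all add: CHAR_eq p_prime)

lemma of_nat_pow_p: "(of_nat n :: 'a) ^ p = of_nat n"
proof (induction n)
  case 0 thus ?case using p2 by simp
next
  case (Suc n)
  have "(of_nat (Suc n) :: 'a) ^ p = (of_nat n + 1) ^ p" by (simp add: add.commute)
  also have "\<dots> = of_nat n ^ p + 1" by (simp add: frob)
  finally show ?case using Suc by simp
qed

lemma Fp_pow_p: "y \<in> Fp \<Longrightarrow> y ^ p = y"
  using Fp_iff of_nat_pow_p by auto

lemma card_Fp: "card Fp = p"
proof -
  have "Fp = (of_nat :: nat \<Rightarrow> 'a) ` {..<p}" unfolding prime_subfield_def by auto
  moreover have "inj_on (of_nat :: nat \<Rightarrow> 'a) {..<p}" by (auto simp: inj_on_def of_nat_eq_iff)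
  ultimately show ?thesis by (simp add: card_image)
qed

lemma Fp_eq: "Fp = {y. y ^ p = y}"
proof -
  define P :: "'a poly" where "P = monom 1 p - [:0,1:]"
  have cP: "coeff P p = 1" using p2 by (auto simp: P_def coeff_monom coeff_pCons split: nat.splits)
  hence P0: "P \<noteq> 0" by auto
  have dP: "degree P \<le> p" unfolding P_def using p2
    by (intro degree_diff_le) (auto simp: degree_monom_le)
  have "{y. y ^ p = y} = {y. poly P y = 0}" by (simp add: P_def poly_monom)
  hence c: "card {y::'a. y ^ p = y} \<le> p" using card_poly_roots_bound[OF P0] dP by simp
  have sub: "Fp \<subseteq> {y. y ^ p = y}" using Fp_pow_p by auto
  have "card Fp = card {y::'a. y ^ p = y}" using c card_Fp card_mono[OF _ sub] by simp
  thus ?thesis using card_subset_eq[OF _ sub] by simp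
qed

lemma Fp_inverse: "a \<in> Fp \<Longrightarrow> inverse a \<in> Fp"
  by (simp add: Fp_eq power_inverse)

lemma Fp_power_int: "a \<in> Fp \<Longrightarrow> power_int a m \<in> Fp"
proof -
  assume "a \<in> Fp"
  hence "a ^ p = a" by (simp add: Fp_eq)
  have "power_int a m ^ p = power_int (power_int a m) (int p)" by simp
  also have "\<dots> = power_int a (int p * m)" by (simp add: power_int_mult mult.commute)
  also have "\<dots> = power_int (a ^ p) m" by (simp add: power_int_mult)
  finally have "power_int a m ^ p = power_int a m" using \<open>a ^ p = a\<close> by simp
  thus ?thesis by (simp add: Fp_eq)
qed

lemma Fp_pow_p_i: "y \<in> Fp \<Longrightarrow> y ^ (p ^ i) = y"
proof (induction i)
  case (Suc i) thus ?case by (simp add: power_mult Fp_pow_p mult.commute)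
qed simp

lemma pow_card_gen: "(x :: 'a) ^ card (UNIV :: 'a set) = x"
proof (cases "x = 0")
  case False
  have "x * (\<Prod>y\<in>UNIV-{0}. x * y) = x * x ^ (card (UNIV :: 'a set) - 1) * \<Prod>(UNIV-{0})"
    by (simp add: prod.distrib mult_ac)
  also have "x * x ^ (card (UNIV :: 'a set) - 1) = x ^ Suc (card (UNIV :: 'a set) - 1)"
    by (subst power_Suc) auto
  also have "Suc (card (UNIV :: 'a set) - 1) = card (UNIV :: 'a set)"
    using finite_UNIV_card_ge_0[where ?'a = 'a] by simp
  also have "(\<Prod>y\<in>UNIV-{0}. x * y) = (\<Prod>y\<in>UNIV-{0}. y)"
    by (rule prod.reindex_bij_witness[of _ "\<lambda>y. y / x" "\<lambda>y. x * y"]) (use False in auto)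
  finally show ?thesis
    by simp
qed (use finite_UNIV_card_ge_0[where ?'a = 'a] in auto)

lemma pow_card: "(x :: 'a) ^ q = x"
  using pow_card_gen[of x] unfolding card_F .

lemma k_pos: "k > 0"
proof (rule ccontr)
  assume "\<not> k > 0"
  hence c1: "card (UNIV::'a set) = 1" using card_F by simp
  have "card {0::'a, 1} \<le> card (UNIV::'a set)" by (rule card_mono) auto
  thus False using c1 by simp
qed

end


lemma geom_sum_mult': "(\<Sum>i<n. (x::'a::comm_ring_1)^i) * (x - 1) = x^n - 1"
  by (induct n) (simp_all add: algebra_simps)

context bsetup begin

abbreviation tr :: "'a \<Rightarrow> 'a" where "tr \<equiv> abs_trace p (2*k)"

lemma tr_add: "tr (x + y) = tr x + tr y"
  by (simp add: abs_trace_def frob' sum.distrib)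

lemma tr_0: "tr 0 = 0"
  using p2 by (simp add: abs_trace_def power_0_left)

lemma tr_neg: "tr (- x) = - tr x"
  using tr_add[of x "-x"] tr_0 by (simp add: eq_neg_iff_add_eq_0 add.commute)

lemma tr_diff: "tr (x - y) = tr x - tr y"
  using tr_add[of x "-y"] tr_neg[of y] by simp

lemma tr_Fp: "tr x \<in> Fp"
proof -
  define g where "g i = x ^ (p ^ i)" for i
  have "tr x ^ p = tr x ^ (p ^ 1)" by simp
  also have "\<dots> = (\<Sum>i<2*k. (x ^ (p^i)) ^ (p ^ 1))" unfolding abs_trace_def by (rule frob_sum)
  also have "\<dots> = (\<Sum>i<2*k. g (Suc i))"
    by (intro sum.cong refl) (simp add: g_def power_mult[symmetric] mult.commute)
  also have "\<dots> = (\<Sum>i<2*k. g i) + g (2*k) - g 0"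
  proof -
    have A: "(\<Sum>i<Suc(2*k). g i) = g 0 + (\<Sum>i<2*k. g (Suc i))" by (rule sum.lessThan_Suc_shift)
    have B: "(\<Sum>i<Suc(2*k). g i) = (\<Sum>i<2*k. g i) + g (2*k)" by (rule sum.lessThan_Suc)
    show ?thesis using A B by (simp add: algebra_simps)
  qed
  also have "g (2*k) = g 0" unfolding g_def using pow_card by simp
  also have "(\<Sum>i<2*k. g i) + g 0 - g 0 = tr x" by (simp add: g_def abs_trace_def)
  finally show ?thesis by (simp add: Fp_eq)
qed

lemma tr_scal: "c \<in> Fp \<Longrightarrow> tr (c * x) = c * tr x"
  by (simp add: abs_trace_def power_mult_distrib Fp_pow_p_i sum_distrib_left)

lemma tr_nonzero: "\<exists>x. tr x \<noteq> 0"
proof (rule ccontr)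
  assume "\<not> (\<exists>x. tr x \<noteq> 0)"
  hence all0: "\<And>x. tr x = 0" by blast
  define n where "n = 2 * k - 1"
  have n2k: "2 * k = Suc n" using k_pos by (simp add: n_def)
  define T :: "'a poly" where "T = (\<Sum>i<2*k. monom 1 (p^i))"
  have polyT: "poly T x = tr x" for x by (simp add: T_def abs_trace_def poly_sum poly_monom)
  have coeffT: "coeff T j = (\<Sum>i<2*k. if p^i = j then 1 else 0)" for j
    by (simp add: T_def coeff_sum coeff_monom)
  have "coeff T (p^n) = (\<Sum>i<2*k. if i = n then 1 else 0)"
    unfolding coeffT using p2 by (intro sum.cong refl) (simp add: power_inject_exp)
  also have "\<dots> = 1" using n2k by simp
  finally have cT: "coeff T (p^n) = 1" .
  hence T0: "T \<noteq> 0" by auto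
  have dT: "degree T \<le> p^n"
  proof (rule degree_le, intro allI impI)
    fix j assume j: "p^n < j"
    have "p^i \<noteq> j" if "i < 2*k" for i
    proof -
      have "i \<le> n" using that n2k by simp
      hence "p^i \<le> p^n" using p2 by (intro power_increasing) auto
      thus ?thesis using j by simp
    qed
    thus "coeff T j = 0" unfolding coeffT by (intro sum.neutral) auto
  qed
  have "{x. poly T x = 0} = UNIV" using all0 polyT by auto
  hence "card (UNIV :: 'a set) \<le> degree T" using card_poly_roots_bound[OF T0] by simp
  also have "\<dots> < p ^ (2*k)" using dT p2 n2k by (simp add: le_less_trans)
  finally show False using card_F by simp
qed

definition ps :: "'a \<Rightarrow> complex" where "ps y = zeta ^ fp_idx p y"
definition ch :: "'a \<Rightarrow> complex" where "ch x = ps (tr x)"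

lemma zeta_pow_mod: "zeta ^ (m mod p) = zeta ^ m"
proof -
  have "zeta ^ m = zeta ^ (p * (m div p) + m mod p)" by simp
  also have "\<dots> = (zeta ^ p) ^ (m div p) * zeta ^ (m mod p)" by (metis power_add power_mult)
  finally show ?thesis using zeta_p by simp
qed

lemma zeta_pow_eq_1: "zeta ^ m = 1 \<longleftrightarrow> p dvd m"
proof
  assume "p dvd m"
  thus "zeta ^ m = 1" using zeta_pow_mod[of m] by simp
next
  assume zm: "zeta ^ m = 1"
  show "p dvd m"
  proof (rule ccontr)
    assume nd: "\<not> p dvd m"
    hence m0: "m \<noteq> 0" by (metis dvd_0_right)
    have "gcd m p dvd p" by simp
    hence "gcd m p = 1 \<or> gcd m p = p" using p_prime by (simp add: prime_nat_iff)
    moreover have "gcd m p \<noteq> p" using nd by (metis gcd_dvd1)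
    ultimately have g: "gcd m p = 1" by blast
    obtain x y where "m * x = p * y + gcd m p" using bezout_nat[OF m0] by blast
    hence mxy: "m * x = p * y + 1" using g by simp
    have "zeta ^ (m * x) = 1" using zm by (simp add: power_mult)
    moreover have "zeta ^ (p * y + 1) = zeta" using zeta_p by (simp add: power_add power_mult)
    ultimately have "zeta = 1" unfolding mxy by simp
    thus False using zeta_1 by simp
  qed
qed

lemma ps_of_nat: "ps (of_nat m) = zeta ^ m"
  by (simp add: ps_def fp_idx_of_nat zeta_pow_mod)

lemma ps_0: "ps 0 = 1"
  using ps_of_nat[of 0] by simp

lemma ps_add: "a \<in> Fp \<Longrightarrow> b \<in> Fp \<Longrightarrow> ps (a + b) = ps a * ps b"
proof -
  assume "a \<in> Fp" "b \<in> Fp"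
  then obtain i j where "a = of_nat i" "b = of_nat j" unfolding Fp_iff by blast
  thus ?thesis by (simp add: ps_of_nat power_add flip: of_nat_add)
qed

lemma ps_scal: "y \<in> Fp \<Longrightarrow> ps (of_nat u * y) = zeta ^ (u * fp_idx p y)"
proof -
  assume "y \<in> Fp"
  hence "of_nat u * y = (of_nat (u * fp_idx p y) :: 'a)" by (metis of_nat_fp_idx of_nat_mult)
  thus ?thesis by (simp only: ps_of_nat)
qed

lemma geom_zeta: "(\<Sum>t<p. zeta ^ (t * m)) = (if p dvd m then of_nat p else 0)"
proof (cases "p dvd m")
  case True
  hence "zeta ^ (t * m) = 1" for t using zeta_pow_eq_1[of "t*m"] by simp
  thus ?thesis using True by simp
next
  case False
  define w where "w = zeta ^ m"
  have w1: "w \<noteq> 1" using False zeta_pow_eq_1 by (simp add: w_def)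
  have "(\<Sum>t<p. zeta ^ (t * m)) = (\<Sum>t<p. w ^ t)" unfolding w_def
    by (intro sum.cong refl) (metis power_mult mult.commute)
  moreover have "(\<Sum>t<p. w ^ t) * (w - 1) = w ^ p - 1" by (rule geom_sum_mult')
  moreover have "w ^ p = (zeta ^ p) ^ m" unfolding w_def by (metis power_mult mult.commute)
  hence "w ^ p = 1" using zeta_p by simp
  ultimately show ?thesis using False w1 by simp
qed

lemma ch_add: "ch (x + y) = ch x * ch y"
  by (simp add: ch_def tr_add ps_add tr_Fp)

lemma ch_0: "ch 0 = 1" by (simp add: ch_def tr_0 ps_0)

lemma ch_neg: "ch (- x) * ch x = 1"
  using ch_add[of "-x" x] ch_0 by simp

lemma sum_ch: "(\<Sum>x\<in>UNIV. ch x) = 0"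
proof -
  obtain x0 where x0: "tr x0 \<noteq> 0" using tr_nonzero by blast
  have "fp_idx p (tr x0) \<noteq> 0" using x0 fp_idx_0_iff tr_Fp by blast
  moreover have "fp_idx p (tr x0) < p" using fp_idx_lt tr_Fp by blast
  ultimately have c1: "ch x0 \<noteq> 1" unfolding ch_def ps_def using zeta_pow_eq_1 by (auto dest: dvd_imp_le)
  have "(\<Sum>x\<in>UNIV. ch x) = (\<Sum>x\<in>UNIV. ch (x + x0))"
    by (rule sum.reindex_bij_witness[of _ "\<lambda>x. x + x0" "\<lambda>x. x - x0"]) auto
  also have "\<dots> = ch x0 * (\<Sum>x\<in>UNIV. ch x)" by (simp add: ch_add sum_distrib_left mult.commute)
  finally show ?thesis using c1 by (metis mult_cancel_right1 mult.commute)
qed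

lemma char_orth: "(\<Sum>x\<in>UNIV. ch (b * x)) = (if b = 0 then of_nat q else 0)"
proof (cases "b = 0")
  case True thus ?thesis by (simp add: ch_0 card_F)
next
  case False
  have "(\<Sum>x\<in>UNIV. ch (b * x)) = (\<Sum>x\<in>UNIV. ch x)"
    by (rule sum.reindex_bij_witness[of _ "\<lambda>x. x / b" "\<lambda>x. b * x"]) (use False in auto)
  thus ?thesis using False sum_ch by simp
qed

end


context bsetup begin

definition gb :: "'a \<Rightarrow> 'a \<Rightarrow> 'a" where "gb b x = f x + tr (b * x)"
definition Nb :: "'a \<Rightarrow> nat \<Rightarrow> nat" where "Nb b i = card {x. fp_idx p (gb b x) = i}"
definition mb :: "'a \<Rightarrow> nat" where "mb b = fp_idx p (fstar b)"
definition EE :: int where "EE = eps * int p ^ k"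
definition C0 :: int where "C0 = int p ^ (2*k-1) - eps * int p ^ (k-1)"

lemma f_Fp: "f x \<in> Fp" using f_vals by blast
lemma gb_Fp: "gb b x \<in> Fp" unfolding gb_def by (intro Fp_add f_Fp tr_Fp)
lemma gb_lt: "fp_idx p (gb b x) < p" using fp_idx_lt gb_Fp by blast
lemma mb_lt: "mb b < p" unfolding mb_def using fp_idx_lt fstar_vals by blast

lemma fiber_sum:
  "(\<Sum>x\<in>UNIV. h (fp_idx p (gb b x))) = (\<Sum>i<p. of_nat (Nb b i) * (h i :: 'c::comm_ring_1))"
  using sum_fiber[of "UNIV::'a set" "\<lambda>x. fp_idx p (gb b x)" p h] gb_lt by (simp add: Nb_def)

lemma Nb_sum: "(\<Sum>i<p. int (Nb b i)) = int q"
  using fiber_sum[of "\<lambda>_. 1::int" b] by (simp add: card_F)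

lemma walsh_eq: "walsh p (2 * k) zeta f b = (\<Sum>i<p. of_nat (Nb b i) * zeta ^ i)"
  unfolding walsh_def using fiber_sum[of "\<lambda>i. zeta ^ i" b] by (simp add: gb_def)

lemma C0_prop: "int p * C0 + EE = int q"
proof -
  have "int p * int p ^ (2*k-1) = int p ^ (2*k)" using k_pos by (simp flip: power_Suc)
  moreover have "int p * int p ^ (k-1) = int p ^ k" using k_pos by (simp flip: power_Suc)
  ultimately show ?thesis by (simp add: C0_def EE_def algebra_simps)
qed

lemma Nb_dist: "i < p \<Longrightarrow> int (Nb b i) = C0 + (if i = mb b then EE else 0)"
proof -
  assume ip: "i < p"
  define c where "c j = int (Nb b j) - (if j = mb b then EE else 0)" for j
  define e where "e j = (if j = mb b then EE else 0)" for j
  have w: "(\<Sum>j<p. of_nat (Nb b j) * zeta ^ j) = of_int eps * of_nat (p ^ k) * zeta ^ mb b"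
    using bent walsh_eq[of b] unfolding mb_def by simp
  have "(\<Sum>j<p. of_int (e j) * zeta ^ j) = (\<Sum>j<p. if j = mb b then of_int EE * zeta ^ j else 0)"
    by (intro sum.cong refl) (simp add: e_def)
  also have "\<dots> = of_int EE * zeta ^ mb b" using mb_lt[of b] by (simp add: sum.delta)
  also have "\<dots> = of_int eps * of_nat (p ^ k) * zeta ^ mb b" by (simp add: EE_def)
  finally have e1: "(\<Sum>j<p. of_int (e j) * zeta ^ j) = of_int eps * of_nat (p ^ k) * zeta ^ mb b" .
  have "(\<Sum>j<p. of_int (c j) * zeta ^ j) = (\<Sum>j<p. of_nat (Nb b j) * zeta ^ j - of_int (e j) * zeta ^ j)"
    by (intro sum.cong refl) (simp add: c_def e_def left_diff_distrib)
  also have "\<dots> = 0" unfolding sum_subtractf w e1 by simp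
  finally have s0: "(\<Sum>j<p. of_int (c j) * zeta ^ j) = 0" .
  have cc: "c j = c 0" if "j < p" for j using cyc_indep[OF p_prime zeta_p zeta_1 s0 that] .
  have "(\<Sum>j<p. e j) = EE" unfolding e_def using mb_lt[of b] by (simp add: sum.delta)
  hence "(\<Sum>j<p. c j) = int q - EE"
    using Nb_sum[of b] unfolding c_def by (simp add: sum_subtractf e_def)
  moreover have "(\<Sum>j<p. c j) = (\<Sum>j<p. c 0)" by (intro sum.cong refl) (metis cc lessThan_iff)
  moreover have "(\<Sum>j<p. c 0) = int p * c 0" by simp
  ultimately have "int p * c 0 = int p * C0" using C0_prop by simp
  hence "c 0 = C0" using p2 by simp
  thus ?thesis using cc[OF ip] by (simp add: c_def)
qed

lemma twisted:
  assumes u: "0 < u" "u < p"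
  shows "(\<Sum>x\<in>UNIV. zeta ^ (u * fp_idx p (gb b x))) = of_int EE * zeta ^ (u * mb b)"
proof -
  define e where "e j = (if j = mb b then EE else 0)" for j
  have "(\<Sum>x\<in>UNIV. zeta ^ (u * fp_idx p (gb b x))) = (\<Sum>i<p. of_nat (Nb b i) * zeta ^ (u * i))"
    by (rule fiber_sum)
  also have "\<dots> = (\<Sum>i<p. of_int C0 * zeta ^ (i * u) + of_int (e i) * zeta ^ (u * i))"
  proof (intro sum.cong refl)
    fix i assume i: "i \<in> {..<p}"
    have "(of_nat (Nb b i) :: complex) = of_int (int (Nb b i))" by simp
    also have "\<dots> = of_int C0 + of_int (e i)" using Nb_dist[of i b] i by (simp add: e_def)
    finally show "of_nat (Nb b i) * zeta ^ (u * i) = of_int C0 * zeta ^ (i * u) + of_int (e i) * zeta ^ (u * i)"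
      by (simp add: distrib_right mult.commute[of i u])
  qed
  also have "\<dots> = of_int C0 * (\<Sum>i<p. zeta ^ (i * u)) + (\<Sum>i<p. of_int (e i) * zeta ^ (u * i))"
    by (simp add: sum.distrib sum_distrib_left)
  also have "(\<Sum>i<p. zeta ^ (i * u)) = 0"
  proof -
    have "\<not> p dvd u" using u by (auto dest: dvd_imp_le)
    thus ?thesis using geom_zeta[of u] by simp
  qed
  also have "(\<Sum>i<p. of_int (e i) * zeta ^ (u * i)) = (\<Sum>i<p. if i = mb b then of_int EE * zeta ^ (u * i) else 0)"
    by (intro sum.cong refl) (simp add: e_def)
  also have "\<dots> = of_int EE * zeta ^ (u * mb b)" using mb_lt[of b] by (simp add: sum.delta)
  finally show ?thesis by simp
qed

end


context bsetup begin

lemma powint_inj: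
  assumes g1: "g1 \<in> Fp" "g1 \<noteq> 0" and g2: "g2 \<in> Fp" "g2 \<noteq> 0"
    and eq: "power_int g1 (1 - l) = power_int g2 (1 - l)"
  shows "g1 = g2"
proof -
  define d where "d = g1 / g2"
  have dF: "d \<in> Fp" unfolding d_def divide_inverse using g1 g2 by (intro Fp_mult Fp_inverse)
  have d0: "d \<noteq> 0" unfolding d_def using g1 g2 by simp
  have "power_int d (1 - l) = power_int g1 (1 - l) / power_int g2 (1 - l)"
    unfolding d_def by (rule power_int_divide_distrib)
  also have "\<dots> = 1" unfolding eq using g2(2) by simp
  finally have d1: "power_int d (1 - l) = 1" .
  have "d ^ p = d" using dF Fp_pow_p by blast
  obtain n where pn: "p = Suc n" using p2 by (cases p) auto
  have "d ^ p = d ^ n * d" unfolding pn by (rule power_Suc2)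
  hence "d ^ n * d = 1 * d" using \<open>d ^ p = d\<close> by simp
  hence "d ^ n = 1" using d0 by (rule mult_right_cancel[THEN iffD1, rotated])
  hence dp: "d ^ (p - 1) = 1" using pn by simp
  have dp': "power_int d (int p - 1) = 1"
  proof -
    have "int p - 1 = int (p - 1)" using p2 by simp
    hence "power_int d (int p - 1) = d ^ (p - 1)" by (simp only: power_int_of_nat)
    thus ?thesis using dp by simp
  qed
  have "gcd (1 - l) (int p - 1) = 1"
  proof -
    have "gcd (1 - l) (int p - 1) = gcd (l - 1) (int p - 1)"
      using gcd_neg1_int[of "l - 1" "int p - 1"] by simp
    thus ?thesis using l_gcd by simp
  qed
  then obtain u v where uv: "u * (1 - l) + v * (int p - 1) = 1" using bezout_int[of "1 - l" "int p - 1"] by auto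
  have "d = power_int d 1" by simp
  also have "(1::int) = (1 - l) * u + (int p - 1) * v" using uv by (simp add: algebra_simps)
  also have "power_int d ((1 - l) * u + (int p - 1) * v) = power_int d ((1 - l) * u) * power_int d ((int p - 1) * v)"
    by (rule power_int_add) (use d0 in simp)
  also have "\<dots> = power_int (power_int d (1 - l)) u * power_int (power_int d (int p - 1)) v"
    by (simp only: power_int_mult)
  also have "\<dots> = 1" by (simp only: d1 dp' power_int_1_left mult_1)
  finally have "d = 1" .
  thus ?thesis unfolding d_def using g2 by simp
qed

definition jv :: "nat \<Rightarrow> 'a" where "jv u = power_int (of_nat u) (1 - l)"
definition sg :: "nat \<Rightarrow> nat" where "sg u = fp_idx p (jv u)"

lemma jv_Fp: "jv u \<in> Fp" unfolding jv_def by (intro Fp_power_int Fp_of_nat)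

lemma of_nat_nz: "0 < u \<Longrightarrow> u < p \<Longrightarrow> (of_nat u :: 'a) \<noteq> 0"
proof
  assume "0 < u" "u < p" "(of_nat u :: 'a) = 0"
  hence "p dvd u" by (simp only: of_nat_0_iff)
  hence "p \<le> u" using \<open>0 < u\<close> by (rule dvd_imp_le)
  thus False using \<open>u < p\<close> by simp
qed

lemma jv_nz: "0 < u \<Longrightarrow> u < p \<Longrightarrow> jv u \<noteq> 0"
proof -
  assume "0 < u" "u < p"
  hence "(of_nat u :: 'a) \<noteq> 0" by (rule of_nat_nz)
  thus ?thesis unfolding jv_def by simp
qed

lemma of_nat_sg: "of_nat (sg u) = jv u"
  unfolding sg_def by (rule of_nat_fp_idx[OF jv_Fp])

lemma sg_bij: "bij_betw sg {1..<p} {1..<p}"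
proof -
  have sub: "sg ` {1..<p} \<subseteq> {1..<p}"
  proof
    fix t assume "t \<in> sg ` {1..<p}"
    then obtain u where u: "u \<in> {1..<p}" "t = sg u" by blast
    have "sg u < p" unfolding sg_def by (rule fp_idx_lt[OF jv_Fp])
    moreover have "sg u \<noteq> 0" unfolding sg_def using fp_idx_0_iff[OF jv_Fp] jv_nz u(1) by auto
    ultimately show "t \<in> {1..<p}" using u by auto
  qed
  have inj: "inj_on sg {1..<p}"
  proof (rule inj_onI)
    fix u v assume u: "u \<in> {1..<p}" and v: "v \<in> {1..<p}" and e: "sg u = sg v"
    have "jv u = jv v" using arg_cong[OF e, of "of_nat :: nat \<Rightarrow> 'a"] by (simp only: of_nat_sg)
    hence e2: "power_int (of_nat u :: 'a) (1 - l) = power_int (of_nat v) (1 - l)" by (simp only: jv_def)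
    have nu: "(of_nat u :: 'a) \<noteq> 0" using u by (intro of_nat_nz) auto
    have nv: "(of_nat v :: 'a) \<noteq> 0" using v by (intro of_nat_nz) auto
    have "(of_nat u :: 'a) = of_nat v" by (rule powint_inj[OF Fp_of_nat nu Fp_of_nat nv e2])
    hence "u mod p = v mod p" by (simp only: of_nat_eq_iff)
    thus "u = v" using u v by simp
  qed
  show ?thesis unfolding bij_betw_def using inj endo_inj_surj[OF _ sub inj] by simp
qed

definition Zs :: "'a set" where "Zs = {x. f x = 0}"
definition Zh :: "'a \<Rightarrow> complex" where "Zh b = (\<Sum>x\<in>Zs. ch (b * x))"

lemma indicator_sum: "y \<in> Fp \<Longrightarrow> (\<Sum>t<p. ps (of_nat t * y)) = (if y = 0 then of_nat p else 0)"
proof -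
  assume y: "y \<in> Fp"
  have "(\<Sum>t<p. ps (of_nat t * y)) = (\<Sum>t<p. zeta ^ (t * fp_idx p y))"
    by (intro sum.cong refl) (simp add: ps_scal[OF y])
  also have "\<dots> = (if p dvd fp_idx p y then of_nat p else 0)" by (rule geom_zeta)
  also have "(p dvd fp_idx p y) = (y = 0)"
  proof -
    have "p dvd fp_idx p y \<longleftrightarrow> fp_idx p y = 0"
    proof
      assume "p dvd fp_idx p y"
      thus "fp_idx p y = 0" using fp_idx_lt[OF y] by (metis dvd_imp_le not_le neq0_conv)
    qed simp
    thus ?thesis using fp_idx_0_iff[OF y] by simp
  qed
  finally show ?thesis .
qed

lemma Zh_expand: "of_nat p * Zh b = (\<Sum>t<p. \<Sum>x\<in>UNIV. ps (of_nat t * f x + tr (b * x)))"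
proof -
  have "of_nat p * Zh b = (\<Sum>x\<in>{x\<in>UNIV. f x = 0}. of_nat p * ch (b * x))"
    unfolding Zh_def Zs_def sum_distrib_left by simp
  also have "\<dots> = (\<Sum>x\<in>UNIV. if f x = 0 then of_nat p * ch (b * x) else 0)"
    by (rule sum.inter_filter) simp
  also have "\<dots> = (\<Sum>x\<in>UNIV. (if f x = 0 then of_nat p else 0) * ch (b * x))"
    by (intro sum.cong refl) simp
  also have "\<dots> = (\<Sum>x\<in>UNIV. (\<Sum>t<p. ps (of_nat t * f x)) * ch (b * x))"
    by (intro sum.cong refl) (simp add: indicator_sum f_Fp)
  also have "\<dots> = (\<Sum>x\<in>UNIV. \<Sum>t<p. ps (of_nat t * f x + tr (b * x)))"
    by (intro sum.cong refl) (simp add: sum_distrib_right ps_add Fp_mult f_Fp tr_Fp ch_def)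
  also have "\<dots> = (\<Sum>t<p. \<Sum>x\<in>UNIV. ps (of_nat t * f x + tr (b * x)))" by (rule sum.swap)
  finally show ?thesis .
qed

lemma term_sg:
  assumes u: "u \<in> {1..<p}"
  shows "(\<Sum>x\<in>UNIV. ps (of_nat (sg u) * f x + tr (b * x))) = of_int EE * zeta ^ (u * mb b)"
proof -
  define g where "g = (of_nat u :: 'a)"
  have gF: "g \<in> Fp" unfolding g_def by simp
  have g0: "g \<noteq> 0" unfolding g_def using u of_nat_nz by auto
  have jg: "jv u * power_int g l = g"
  proof -
    have "power_int g ((1 - l) + l) = power_int g (1 - l) * power_int g l"
      by (rule power_int_add) (use g0 in simp)
    moreover have "jv u = power_int g (1 - l)" unfolding jv_def g_def ..
    ultimately show ?thesis by simp
  qed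
  have "(\<Sum>x\<in>UNIV. ps (of_nat (sg u) * f x + tr (b * x))) = (\<Sum>x\<in>UNIV. ps (jv u * f x + tr (b * x)))"
    by (simp add: of_nat_sg)
  also have "\<dots> = (\<Sum>y\<in>UNIV. ps (jv u * f (g * y) + tr (b * (g * y))))"
    by (rule sum.reindex_bij_witness[of _ "\<lambda>y. g * y" "\<lambda>x. x / g"]) (use g0 in auto)
  also have "\<dots> = (\<Sum>y\<in>UNIV. ps (of_nat u * gb b y))"
  proof (intro sum.cong refl)
    fix y
    have "jv u * f (g * y) = g * f y" using f_hom gF jg by (simp add: mult.assoc[symmetric])
    moreover have "tr (b * (g * y)) = g * tr (b * y)"
      using tr_scal[OF gF, of "b * y"] by (simp add: mult.left_commute)
    ultimately have "jv u * f (g * y) + tr (b * (g * y)) = of_nat u * gb b y"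
      by (simp add: gb_def g_def distrib_left)
    thus "ps (jv u * f (g * y) + tr (b * (g * y))) = ps (of_nat u * gb b y)" by simp
  qed
  also have "\<dots> = (\<Sum>y\<in>UNIV. zeta ^ (u * fp_idx p (gb b y)))"
    by (intro sum.cong refl) (simp add: ps_scal gb_Fp)
  also have "\<dots> = of_int EE * zeta ^ (u * mb b)" using u by (intro twisted) auto
  finally show ?thesis .
qed

lemma Zh_formula:
  "of_nat p * Zh b = (if b = 0 then of_nat q else 0) + of_int EE * ((if mb b = 0 then of_nat p else 0) - 1)"
proof -
  define F where "F t = (\<Sum>x\<in>UNIV. ps (of_nat t * f x + tr (b * x)))" for t
  have split: "{..<p} = insert 0 {1..<p}" using p2 by auto
  have "of_nat p * Zh b = F 0 + (\<Sum>t\<in>{1..<p}. F t)"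
    unfolding Zh_expand F_def split by simp
  also have "F 0 = (if b = 0 then of_nat q else 0)"
    unfolding F_def using char_orth[of b] by (simp add: ch_def)
  also have "(\<Sum>t\<in>{1..<p}. F t) = (\<Sum>u\<in>{1..<p}. F (sg u))"
    using sum.reindex_bij_betw[OF sg_bij, of F] by simp
  also have "\<dots> = (\<Sum>u\<in>{1..<p}. of_int EE * zeta ^ (u * mb b))"
    unfolding F_def by (intro sum.cong refl) (rule term_sg)
  also have "\<dots> = of_int EE * ((\<Sum>u<p. zeta ^ (u * mb b)) - 1)"
    unfolding split by (simp add: sum_distrib_left)
  also have "(\<Sum>u<p. zeta ^ (u * mb b)) = (if mb b = 0 then of_nat p else 0)"
  proof -
    have "p dvd mb b \<longleftrightarrow> mb b = 0" using mb_lt[of b] by (auto dest: dvd_imp_le)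
    thus ?thesis using geom_zeta[of "mb b"] by simp
  qed
  finally show ?thesis .
qed

end


context bsetup begin

lemma ch_lin: "ch (b * x) * ch (- (a * b)) = ch (b * (x - a))"
proof -
  have "ch (b * x) * ch (- (a * b)) = ch (b * x + - (a * b))" by (simp only: ch_add)
  also have "b * x + - (a * b) = b * (x - a)" by (simp add: algebra_simps)
  finally show ?thesis .
qed

lemma orth2: "(\<Sum>b\<in>UNIV. ch (b * c)) = (if c = 0 then of_nat q else 0)"
proof -
  have "(\<Sum>b\<in>UNIV. ch (b * c)) = (\<Sum>b\<in>UNIV. ch (c * b))" by (simp add: mult.commute)
  thus ?thesis by (simp add: char_orth)
qed

lemma Zs_fin: "finite Zs" by simp

lemma inversion: "(\<Sum>b\<in>UNIV. Zh b * ch (- (a * b))) = (if a \<in> Zs then of_nat q else 0)"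
proof -
  have "(\<Sum>b\<in>UNIV. Zh b * ch (- (a * b))) = (\<Sum>b\<in>UNIV. \<Sum>x\<in>Zs. ch (b * (x - a)))"
    unfolding Zh_def sum_distrib_right by (simp add: ch_lin)
  also have "\<dots> = (\<Sum>x\<in>Zs. \<Sum>b\<in>UNIV. ch (b * (x - a)))" by (rule sum.swap)
  also have "\<dots> = (\<Sum>x\<in>Zs. if x = a then of_nat q else 0)"
    by (intro sum.cong refl) (simp add: orth2)
  also have "\<dots> = (if a \<in> Zs then of_nat q else 0)" by (simp add: sum.delta')
  finally show ?thesis .
qed

lemma delta_sum: "(\<Sum>b\<in>UNIV. ch (- (a * b))) = (if a = 0 then of_nat q else 0)"
proof -
  have "(\<Sum>b\<in>UNIV. ch (- (a * b))) = (\<Sum>b\<in>UNIV. ch (b * (- a)))" by (simp add: mult.commute)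
  thus ?thesis using orth2[of "- a"] by simp
qed

lemma Zs_neg: "x \<in> Zs \<longleftrightarrow> - x \<in> Zs"
  unfolding Zs_def using f_even by simp

lemma Zh_neg: "Zh (- b) = Zh b"
proof -
  have "Zh (- b) = (\<Sum>x\<in>Zs. ch (b * (- x)))" unfolding Zh_def by simp
  also have "\<dots> = (\<Sum>x\<in>Zs. ch (b * x))"
    by (rule sum.reindex_bij_witness[of _ "\<lambda>x. - x" "\<lambda>x. - x"]) (auto simp: Zs_neg[symmetric])
  finally show ?thesis unfolding Zh_def .
qed

definition Mc :: "'a \<Rightarrow> nat" where "Mc a = card {y\<in>Zs. y + a \<in> Zs}"

lemma convolution: "(\<Sum>b\<in>UNIV. (Zh b)^2 * ch (- (a * b))) = of_nat q * of_nat (Mc a)"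
proof -
  have sq: "(Zh b)^2 = (\<Sum>x\<in>Zs. \<Sum>y\<in>Zs. ch (b * x) * ch (- (y * b)))" for b
  proof -
    have "(Zh b)^2 = Zh b * Zh (- b)" by (simp add: Zh_neg power2_eq_square)
    also have "Zh (- b) = (\<Sum>y\<in>Zs. ch (- (y * b)))" unfolding Zh_def by (simp add: mult.commute)
    finally show ?thesis unfolding Zh_def by (simp add: sum_product)
  qed
  have "(\<Sum>b\<in>UNIV. (Zh b)^2 * ch (- (a * b))) = (\<Sum>b\<in>UNIV. \<Sum>x\<in>Zs. \<Sum>y\<in>Zs. ch (b * (x - y - a)))"
  proof (intro sum.cong refl)
    fix b
    have "(Zh b)^2 * ch (- (a * b)) = (\<Sum>x\<in>Zs. \<Sum>y\<in>Zs. ch (b * x) * ch (- (y * b)) * ch (- (a * b)))"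
      unfolding sq by (simp add: sum_distrib_right)
    also have "\<dots> = (\<Sum>x\<in>Zs. \<Sum>y\<in>Zs. ch (b * (x - y - a)))"
    proof (intro sum.cong refl)
      fix x y
      have "ch (b * x) * ch (- (y * b)) * ch (- (a * b)) = ch (b * x + - (y * b) + - (a * b))"
        by (simp only: ch_add)
      also have "b * x + - (y * b) + - (a * b) = b * (x - y - a)" by (simp add: algebra_simps)
      finally show "ch (b * x) * ch (- (y * b)) * ch (- (a * b)) = ch (b * (x - y - a))" .
    qed
    finally show "(Zh b)^2 * ch (- (a * b)) = (\<Sum>x\<in>Zs. \<Sum>y\<in>Zs. ch (b * (x - y - a)))" .
  qed
  also have "\<dots> = (\<Sum>x\<in>Zs. \<Sum>b\<in>UNIV. \<Sum>y\<in>Zs. ch (b * (x - y - a)))"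
    by (rule sum.swap)
  also have "\<dots> = (\<Sum>x\<in>Zs. \<Sum>y\<in>Zs. \<Sum>b\<in>UNIV. ch (b * (x - y - a)))"
    by (rule sum.cong[OF refl], rule sum.swap)
  also have "\<dots> = (\<Sum>x\<in>Zs. \<Sum>y\<in>Zs. if x = y + a then of_nat q else 0)"
  proof (rule sum.cong[OF refl], rule sum.cong[OF refl])
    fix x y
    have "(x - y - a = 0) = (x = y + a)" by (simp add: algebra_simps)
    thus "(\<Sum>b\<in>UNIV. ch (b * (x - y - a))) = (if x = y + a then of_nat q else 0)"
      by (simp only: orth2)
  qed
  also have "\<dots> = (\<Sum>y\<in>Zs. \<Sum>x\<in>Zs. if x = y + a then of_nat q else 0)"
    by (rule sum.swap)
  also have "\<dots> = (\<Sum>y\<in>Zs. if y + a \<in> Zs then of_nat q else 0)"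
    by (intro sum.cong refl) (simp add: sum.delta')
  also have "\<dots> = of_nat q * of_nat (Mc a)"
    by (simp add: Mc_def sum.If_cases Int_def)
  finally show ?thesis .
qed

end


lemma a1: "(pc::complex)^2 * Pc^2 * (pc * Pc^2 - 1 * Pc) - ((1 * Pc * (pc - 1) - 1 * Pc) * (pc^2 * Pc^2)
          - (1 * Pc * (pc - 1)) * (- (1 * Pc)) * (pc^2 * Pc^2)
          + (pc * Pc^2 - 1 * Pc - 1 * Pc * (pc - 1)) * (pc * Pc^2 - 1 * Pc + 1 * Pc)) =
   - (pc^2 * Pc^3 * (pc - 2))"
  by (simp add: algebra_simps power2_eq_square power3_eq_cube)
lemma a2: "(pc::complex)^2 * Pc^2 * (pc * Pc^2 - (-1) * Pc) - (((-1) * Pc * (pc - 1) - (-1) * Pc) * (pc^2 * Pc^2)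
          - ((-1) * Pc * (pc - 1)) * (- ((-1) * Pc)) * (pc^2 * Pc^2)
          + (pc * Pc^2 - (-1) * Pc - (-1) * Pc * (pc - 1)) * (pc * Pc^2 - (-1) * Pc + (-1) * Pc)) =
   (pc^2 * Pc^3 * (pc - 2))"
  by (simp add: algebra_simps power2_eq_square power3_eq_cube)

context bsetup begin

definition Pn :: nat where "Pn = p ^ (k - 1)"
lemma pk: "p ^ k = p * Pn"
  unfolding Pn_def using k_pos by (simp flip: power_Suc)
lemma pq: "q = p^2 * Pn^2"
proof -
  have "q = (p ^ k)^2" by (simp add: power_mult[symmetric] mult.commute)
  thus ?thesis by (simp add: pk power_mult_distrib)
qed

definition R :: complex where "R = of_int eps * of_nat Pn"
definition r1 :: complex where "r1 = R * (of_nat p - 1)"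
definition r2 :: complex where "r2 = - R"
definition zz :: complex where "zz = Zh 0"
definition KK :: complex where "KK = (zz - r1) * (zz - r2)"

lemma pk_c: "(of_nat p :: complex) ^ k = of_nat p * of_nat Pn"
  using arg_cong[OF pk, of "of_nat :: nat \<Rightarrow> complex"] by simp

lemma EE_c: "(of_int EE :: complex) = of_nat p * R"
  unfolding EE_def R_def by (simp add: pk_c)

lemma p_nz: "(of_nat p :: complex) \<noteq> 0" using p2 by simp

lemma Zh_nz: "b \<noteq> 0 \<Longrightarrow> Zh b = R * ((if mb b = 0 then of_nat p else 0) - 1)"
proof -
  assume b: "b \<noteq> 0"
  have "of_nat p * Zh b = of_nat p * (R * ((if mb b = 0 then of_nat p else 0) - 1))"
    using Zh_formula[of b] b by (simp add: EE_c mult.assoc)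
  thus ?thesis using p_nz by (rule mult_left_cancel[THEN iffD1, rotated])
qed

lemma Zh_0: "of_nat p * zz = of_nat q + of_nat p * R * ((if mb 0 = 0 then of_nat p else 0) - 1)"
  unfolding zz_def using Zh_formula[of 0] by (simp add: EE_c)

lemma zz_card: "zz = of_nat (card Zs)"
  unfolding zz_def Zh_def by (simp add: ch_0)

lemma sq_lin: "(Zh b)^2 = (r1 + r2) * Zh b - r1 * r2 + (if b = 0 then KK else 0)"
proof (cases "b = 0")
  case True thus ?thesis by (simp add: KK_def zz_def power2_eq_square algebra_simps)
next
  case False
  have "(Zh b - r1) * (Zh b - r2) = 0"
    using Zh_nz[OF False] by (cases "mb b = 0") (simp_all add: r1_def r2_def)
  thus ?thesis using False by (simp add: power2_eq_square algebra_simps)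
qed

lemma main_id:
  "of_nat q * of_nat (Mc a) = (r1 + r2) * (if a \<in> Zs then of_nat q else 0)
     - r1 * r2 * (if a = 0 then of_nat q else 0) + KK"
proof -
  have "of_nat q * of_nat (Mc a) = (\<Sum>b\<in>UNIV. (Zh b)^2 * ch (- (a * b)))" by (simp add: convolution)
  also have "\<dots> = (\<Sum>b\<in>UNIV. (r1 + r2) * (Zh b * ch (- (a * b))) - r1 * r2 * ch (- (a * b))
                      + (if b = 0 then KK * ch (- (a * b)) else 0))"
    by (intro sum.cong refl) (simp add: sq_lin algebra_simps)
  also have "\<dots> = (r1 + r2) * (\<Sum>b\<in>UNIV. Zh b * ch (- (a * b))) - r1 * r2 * (\<Sum>b\<in>UNIV. ch (- (a * b)))
                      + (\<Sum>b\<in>UNIV. if b = 0 then KK * ch (- (a * b)) else 0)"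
    by (simp add: sum.distrib sum_subtractf sum_distrib_left)
  also have "(\<Sum>b\<in>UNIV. if b = 0 then KK * ch (- (a * b)) else 0) = KK"
    by (simp add: sum.delta ch_0)
  finally show ?thesis by (simp add: inversion delta_sum)
qed

lemma Mc_0: "Mc 0 = card Zs" unfolding Mc_def by simp

lemma eps_c: "(of_int eps :: complex) = 1 \<or> (of_int eps :: complex) = -1"
  using eps_pm by auto

lemma mb0: "mb 0 = 0"
proof (rule ccontr)
  assume m: "mb 0 \<noteq> 0"
  define pc where "pc = (of_nat p :: complex)"
  define Pc where "Pc = (of_nat Pn :: complex)"
  define e where "e = (of_int eps :: complex)"
  have qc: "(of_nat q :: complex) = pc^2 * Pc^2" unfolding pc_def Pc_def by (simp add: pq)
  have ifv: "(if mb 0 = 0 then of_nat p else 0) = (0::complex)" using m by simp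
  have "of_nat p * zz = of_nat q + of_nat p * R * (0 - 1)" using Zh_0 unfolding ifv .
  hence "pc * zz = pc^2 * Pc^2 + pc * (e * Pc) * (0 - 1)" unfolding qc unfolding pc_def Pc_def e_def R_def .
  hence "pc * zz = pc * (pc * Pc^2 - e * Pc)" by (simp add: algebra_simps power2_eq_square)
  hence z: "zz = pc * Pc^2 - e * Pc" using p_nz unfolding pc_def by simp
  have eq: "of_nat q * zz = (r1 + r2) * of_nat q - r1 * r2 * of_nat q + KK"
    using main_id[of 0] f0 by (simp add: Mc_0 zz_card Zs_def)
  have Re: "R = e * Pc" unfolding R_def e_def Pc_def ..
  have e2: "e * e = 1" using eps_c unfolding e_def by auto
  have "pc^2 * Pc^2 * (pc * Pc^2 - e * Pc) = (e * Pc * (pc - 1) - e * Pc) * (pc^2 * Pc^2)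
          - (e * Pc * (pc - 1)) * (- (e * Pc)) * (pc^2 * Pc^2)
          + (pc * Pc^2 - e * Pc - e * Pc * (pc - 1)) * (pc * Pc^2 - e * Pc + e * Pc)"
    using eq unfolding qc z KK_def r1_def r2_def Re pc_def by simp
  hence "pc^2 * Pc^3 * (pc - 2) = 0"
  proof -
    assume H: "pc^2 * Pc^2 * (pc * Pc^2 - e * Pc) = (e * Pc * (pc - 1) - e * Pc) * (pc^2 * Pc^2)
          - (e * Pc * (pc - 1)) * (- (e * Pc)) * (pc^2 * Pc^2)
          + (pc * Pc^2 - e * Pc - e * Pc * (pc - 1)) * (pc * Pc^2 - e * Pc + e * Pc)"
    from eps_c have "e = 1 \<or> e = -1" unfolding e_def .
    thus ?thesis
    proof
      assume "e = 1"
      thus ?thesis using H a1[of pc Pc] by simp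
    next
      assume "e = -1"
      thus ?thesis using H a2[of pc Pc] by simp
    qed
  qed
  moreover have "pc \<noteq> 0" unfolding pc_def using p_nz .
  moreover have "Pc \<noteq> 0" unfolding Pc_def Pn_def using p2 by simp
  moreover have "pc - 2 \<noteq> 0"
  proof -
    have "pc - 2 = of_nat (p - 2)" unfolding pc_def using p2 by (simp add: of_nat_diff)
    moreover have "(of_nat (p - 2) :: complex) \<noteq> 0" using p3 by (simp only: of_nat_eq_0_iff)
    ultimately show ?thesis by metis
  qed
  ultimately show False by simp
qed

end



lemma diff_count_eq: "diff_count (A :: 'b::ab_group_add set) a = card {h\<in>A. h + a \<in> A}"
proof -
  have "{(g, h). g \<in> A \<and> h \<in> A \<and> g - h = a} = (\<lambda>h. (h + a, h)) ` {h\<in>A. h + a \<in> A}"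
    by (auto simp: image_def algebra_simps)
  moreover have "inj_on (\<lambda>h. (h + a, h)) {h\<in>A. h + a \<in> A}" by (auto simp: inj_on_def)
  ultimately show ?thesis unfolding diff_count_def by (simp add: card_image)
qed

context bsetup begin

definition Dl :: "'a set" where "Dl = {x. x \<noteq> 0 \<and> f x = 0}"

lemma Dl_Zs: "Dl = Zs - {0}" unfolding Dl_def Zs_def by auto
lemma zero_Zs: "0 \<in> Zs" unfolding Zs_def using f0 by simp

lemma card_Dl: "card Dl = card Zs - 1" unfolding Dl_Zs using zero_Zs by simp

lemma Dl_neg: "x \<in> Dl \<longleftrightarrow> - x \<in> Dl" unfolding Dl_def using f_even by auto

lemma Mc_split:
  assumes a: "a \<noteq> 0"
  shows "Mc a = card {h\<in>Dl. h + a \<in> Dl} + (if a \<in> Zs then 2 else 0)"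
proof -
  define S where "S = {y\<in>Zs. y + a \<in> Zs}"
  define A where "A = {h\<in>Dl. h + a \<in> Dl}"
  define T where "T = (if a \<in> Zs then {0, - a} else {})"
  have SAT: "S = A \<union> T"
  proof (rule Set.set_eqI)
    fix y
    show "y \<in> S \<longleftrightarrow> y \<in> A \<union> T"
    proof (cases "a \<in> Zs")
      case True
      have "- a \<in> Zs" using True Zs_neg by blast
      thus ?thesis using True zero_Zs unfolding S_def A_def T_def Dl_Zs
        by (auto simp: add_eq_0_iff2)
    next
      case False
      have "- a \<notin> Zs" using False Zs_neg by simp
      thus ?thesis using False zero_Zs unfolding S_def A_def T_def Dl_Zs
        by (auto simp: add_eq_0_iff2)
    qed
  qed
  have disj: "A \<inter> T = {}" unfolding A_def T_def Dl_Zs by auto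
  have cT: "card T = (if a \<in> Zs then 2 else 0)" unfolding T_def using a by simp
  have "Mc a = card S" unfolding Mc_def S_def ..
  also have "\<dots> = card A + card T" unfolding SAT using disj by (simp add: card_Un_disjoint)
  finally show ?thesis unfolding cT A_def .
qed

lemma zz_val: "zz = of_nat p * of_nat Pn ^ 2 + R * (of_nat p - 1)"
proof -
  have "of_nat p * zz = of_nat q + of_nat p * R * (of_nat p - 1)" using Zh_0 mb0 by simp
  also have "(of_nat q :: complex) = of_nat p * (of_nat p * of_nat Pn ^ 2)"
    using arg_cong[OF pq, of "of_nat :: nat \<Rightarrow> complex"] by (simp add: power2_eq_square)
  finally have "of_nat p * zz = of_nat p * (of_nat p * of_nat Pn ^ 2 + R * (of_nat p - 1))"
    by (simp add: algebra_simps)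
  thus ?thesis using p_nz by (rule mult_left_cancel[THEN iffD1, rotated])
qed

lemma q_c: "(of_nat q :: complex) = of_nat p ^ 2 * of_nat Pn ^ 2"
  using arg_cong[OF pq, of "of_nat :: nat \<Rightarrow> complex"] by simp

lemma KK_val: "KK = of_nat q * (of_nat Pn ^ 2 + R)"
  unfolding KK_def zz_val r1_def r2_def q_c by (simp add: algebra_simps power2_eq_square)

lemma Mc_val: "a \<noteq> 0 \<Longrightarrow> of_nat (Mc a) = (if a \<in> Zs then R * (of_nat p - 2) else 0) + of_nat Pn ^ 2 + R"
proof -
  assume a: "a \<noteq> 0"
  define Q where "Q = (of_nat q :: complex)"
  have mi: "Q * of_nat (Mc a) = (r1 + r2) * (if a \<in> Zs then Q else 0) - r1 * r2 * (if a = 0 then Q else 0) + KK"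
    unfolding Q_def by (rule main_id)
  have kk: "KK = Q * (of_nat Pn ^ 2 + R)" unfolding Q_def by (rule KK_val)
  have "Q * of_nat (Mc a) = (r1 + r2) * (if a \<in> Zs then Q else 0) + KK" using mi a by simp
  also have "\<dots> = Q * ((if a \<in> Zs then R * (of_nat p - 2) else 0) + of_nat Pn ^ 2 + R)"
    unfolding kk r1_def r2_def by (cases "a \<in> Zs") (simp_all add: algebra_simps)
  finally have "Q * of_nat (Mc a) = Q * ((if a \<in> Zs then R * (of_nat p - 2) else 0) + of_nat Pn ^ 2 + R)" .
  moreover have "Q \<noteq> 0" unfolding Q_def using p2 by simp
  ultimately show ?thesis by (rule mult_left_cancel[THEN iffD1, rotated])
qed

lemma card_Zs_int: "int (card Zs) = int p * int Pn ^ 2 + eps * int Pn * (int p - 1)"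
proof -
  have "(of_int (int (card Zs)) :: complex) = of_int (int p * int Pn ^ 2 + eps * int Pn * (int p - 1))"
    using zz_card zz_val unfolding R_def by simp
  thus ?thesis by (simp only: of_int_eq_iff)
qed

lemma Mc_int: "a \<noteq> 0 \<Longrightarrow> int (Mc a) = (if a \<in> Zs then eps * int Pn * (int p - 2) else 0) + int Pn ^ 2 + eps * int Pn"
proof -
  assume a: "a \<noteq> 0"
  have "(of_int (int (Mc a)) :: complex) = of_int ((if a \<in> Zs then eps * int Pn * (int p - 2) else 0) + int Pn ^ 2 + eps * int Pn)"
    using Mc_val[OF a] unfolding R_def by simp
  thus ?thesis by (simp only: of_int_eq_iff)
qed

lemma eps_sq: "eps * eps = 1" using eps_pm by auto

lemma int_pk: "int p ^ k = int p * int Pn" using arg_cong[OF pk, of int] by simp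
lemma int_pk1: "int p ^ (k - 1) = int Pn" unfolding Pn_def by simp

lemma final_pds:
  "is_pds Dl (int p ^ (2 * k))
            ((int p ^ k - eps) * (int p ^ (k - 1) + eps))
            ((int p ^ (k - 1) + eps)\<^sup>2 - 3 * eps * (int p ^ (k - 1) + eps) + eps * int p ^ k)
            ((int p ^ (k - 1) + eps) * int p ^ (k - 1))"
proof -
  have c0: "card Zs \<ge> 1" using card_mono[OF Zs_fin, of "{0}"] zero_Zs by simp
  have cardD: "int (card Dl) = (int p ^ k - eps) * (int p ^ (k - 1) + eps)"
  proof -
    have "int (card Dl) = int (card Zs) - 1" using card_Dl c0 by simp
    also have "\<dots> = int p * int Pn ^ 2 + eps * int Pn * (int p - 1) - 1" by (simp add: card_Zs_int)
    also have "\<dots> = (int p * int Pn - eps) * (int Pn + eps)"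
      using eps_sq by (simp add: algebra_simps power2_eq_square)
    finally have X: "int (card Dl) = (int p * int Pn - eps) * (int Pn + eps)" .
    show ?thesis unfolding int_pk int_pk1 by (rule X)
  qed
  have lam: "int (diff_count Dl x) = (int p ^ (k - 1) + eps)\<^sup>2 - 3 * eps * (int p ^ (k - 1) + eps) + eps * int p ^ k"
    if x: "x \<in> Dl" for x
  proof -
    have x0: "x \<noteq> 0" and xZ: "x \<in> Zs" using x unfolding Dl_Zs by auto
    have "int (diff_count Dl x) = int (Mc x) - 2" using Mc_split[OF x0] xZ by (simp add: diff_count_eq)
    also have "\<dots> = eps * int Pn * (int p - 2) + int Pn ^ 2 + eps * int Pn - 2" using Mc_int[OF x0] xZ by simp
    also have "\<dots> = (int Pn + eps)\<^sup>2 - 3 * eps * (int Pn + eps) + eps * (int p * int Pn)"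
      using eps_sq by (simp add: algebra_simps power2_eq_square)
    finally have X: "int (diff_count Dl x) = (int Pn + eps)\<^sup>2 - 3 * eps * (int Pn + eps) + eps * (int p * int Pn)" .
    show ?thesis unfolding int_pk int_pk1 by (rule X)
  qed
  have mu: "int (diff_count Dl x) = (int p ^ (k - 1) + eps) * int p ^ (k - 1)"
    if x: "x \<noteq> 0 \<and> x \<notin> Dl" for x
  proof -
    have x0: "x \<noteq> 0" and xZ: "x \<notin> Zs" using x unfolding Dl_Zs by auto
    have "int (diff_count Dl x) = int (Mc x)" using Mc_split[OF x0] xZ by (simp add: diff_count_eq)
    also have "\<dots> = int Pn ^ 2 + eps * int Pn" using Mc_int[OF x0] xZ by simp
    also have "\<dots> = (int Pn + eps) * int Pn" by (simp add: algebra_simps power2_eq_square)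
    finally have X: "int (diff_count Dl x) = (int Pn + eps) * int Pn" .
    show ?thesis unfolding int_pk1 by (rule X)
  qed
  show ?thesis unfolding is_pds_def
    using cardD lam mu card_F by (auto simp: Dl_def)
qed

lemma final_srg:
  "is_srg (\<lambda>x y. x - y \<in> Dl) (int p ^ (2 * k))
            ((int p ^ k - eps) * (int p ^ (k - 1) + eps))
            ((int p ^ (k - 1) + eps)\<^sup>2 - 3 * eps * (int p ^ (k - 1) + eps) + eps * int p ^ k)
            ((int p ^ (k - 1) + eps) * int p ^ (k - 1))"
proof -
  note P = final_pds[unfolded is_pds_def]
  have sym: "x - y \<in> Dl \<longleftrightarrow> y - x \<in> Dl" for x y
    using Dl_neg[of "x - y"] by simp
  have irr: "x - x \<notin> Dl" for x using P by simp
  have deg: "card {y. x - y \<in> Dl} = card Dl" for x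
  proof -
    have "{y. x - y \<in> Dl} = (\<lambda>d. x - d) ` Dl"
    proof (rule Set.set_eqI)
      fix y
      show "y \<in> {y. x - y \<in> Dl} \<longleftrightarrow> y \<in> (\<lambda>d. x - d) ` Dl"
      proof
        assume "y \<in> {y. x - y \<in> Dl}"
        hence "(\<lambda>d. x - d) (x - y) \<in> (\<lambda>d. x - d) ` Dl" by (intro imageI) simp
        thus "y \<in> (\<lambda>d. x - d) ` Dl" by simp
      qed auto
    qed
    moreover have "inj_on (\<lambda>d. x - d) Dl" by (auto simp: inj_on_def)
    ultimately show ?thesis by (simp add: card_image)
  qed
  have com: "card {z. x - z \<in> Dl \<and> y - z \<in> Dl} = diff_count Dl (x - y)" for x y
  proof -
    have "{z. x - z \<in> Dl \<and> y - z \<in> Dl} = (\<lambda>h. y - h) ` {h\<in>Dl. h + (x - y) \<in> Dl}"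
    proof (rule Set.set_eqI)
      fix z
      show "z \<in> {z. x - z \<in> Dl \<and> y - z \<in> Dl} \<longleftrightarrow> z \<in> (\<lambda>h. y - h) ` {h\<in>Dl. h + (x - y) \<in> Dl}"
      proof
        assume "z \<in> {z. x - z \<in> Dl \<and> y - z \<in> Dl}"
        hence "y - z \<in> {h\<in>Dl. h + (x - y) \<in> Dl}" by (simp add: algebra_simps)
        moreover have "z = y - (y - z)" by simp
        ultimately show "z \<in> (\<lambda>h. y - h) ` {h\<in>Dl. h + (x - y) \<in> Dl}" by blast
      next
        assume "z \<in> (\<lambda>h. y - h) ` {h\<in>Dl. h + (x - y) \<in> Dl}"
        then obtain h where h: "h \<in> Dl" "h + (x - y) \<in> Dl" "z = y - h" by blast
        have e1: "y - z = h" and e2: "x - z = h + (x - y)" using h(3) by (simp_all add: algebra_simps)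
        show "z \<in> {z. x - z \<in> Dl \<and> y - z \<in> Dl}" unfolding mem_Collect_eq e1 e2
          using h(2) h(1) by (rule conjI)
      qed
    qed
    moreover have "inj_on (\<lambda>h. y - h) {h\<in>Dl. h + (x - y) \<in> Dl}" by (auto simp: inj_on_def)
    ultimately show ?thesis by (simp add: card_image diff_count_eq)
  qed
  show ?thesis unfolding is_srg_def
  proof (intro conjI allI impI)
    fix x y show "(x - y \<in> Dl) = (y - x \<in> Dl)" by (rule sym)
  next
    fix x show "x - x \<notin> Dl" by (rule irr)
  next
    show "int (card (UNIV :: 'a set)) = int p ^ (2 * k)" using P by simp
  next
    fix x show "int (card {y. x - y \<in> Dl}) = (int p ^ k - eps) * (int p ^ (k - 1) + eps)"
      using P deg by simp
  next
    fix x y assume "x - y \<in> Dl"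
    thus "int (card {z. x - z \<in> Dl \<and> y - z \<in> Dl}) =
      (int p ^ (k - 1) + eps)\<^sup>2 - 3 * eps * (int p ^ (k - 1) + eps) + eps * int p ^ k"
      using P com by simp
  next
    fix x y assume "x \<noteq> y \<and> x - y \<notin> Dl"
    thus "int (card {z. x - z \<in> Dl \<and> y - z \<in> Dl}) = (int p ^ (k - 1) + eps) * int p ^ (k - 1)"
      using P com by simp
  qed
qed

end

theorem theorem1:
  fixes p k :: nat and f fstar :: "'a::{field,finite} \<Rightarrow> 'a" and l :: int
    and zeta :: complex and eps :: int
  assumes p_prime: "prime p" and p_odd: "odd p"
    and card_F: "card (UNIV::'a set) = p ^ (2 * k)"
    and char_p: "of_nat p = (0::'a)"
    and zeta_prim: "zeta ^ p = 1" "zeta \<noteq> 1"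
    and f_vals: "\<forall>x. f x \<in> prime_subfield p"
    and f0: "f 0 = 0"
    and f_even: "\<forall>x. f (- x) = f x"
    and l_gcd: "gcd (l - 1) (int p - 1) = 1"
    and f_hom: "\<forall>\<alpha>\<in>prime_subfield p. \<forall>x. f (\<alpha> * x) = power_int \<alpha> l * f x"
    and eps_pm: "eps \<in> {1, -1}"
    and fstar_vals: "\<forall>b. fstar b \<in> prime_subfield p"
    and bent: "\<forall>b. walsh p (2 * k) zeta f b
                  = of_int eps * of_nat (p ^ k) * zeta ^ fp_idx p (fstar b)"
  defines "D \<equiv> {x. x \<noteq> 0 \<and> f x = 0}"
  shows "is_pds D (int p ^ (2 * k))
            ((int p ^ k - eps) * (int p ^ (k - 1) + eps))
            ((int p ^ (k - 1) + eps)\<^sup>2 - 3 * eps * (int p ^ (k - 1) + eps) + eps * int p ^ k)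
            ((int p ^ (k - 1) + eps) * int p ^ (k - 1))
       \<and> is_srg (\<lambda>x y. x - y \<in> D) (int p ^ (2 * k))
            ((int p ^ k - eps) * (int p ^ (k - 1) + eps))
            ((int p ^ (k - 1) + eps)\<^sup>2 - 3 * eps * (int p ^ (k - 1) + eps) + eps * int p ^ k)
            ((int p ^ (k - 1) + eps) * int p ^ (k - 1))"
proof -
  interpret bsetup p k f fstar l zeta eps
    by unfold_locales (fact assms)+
  show ?thesis unfolding D_def using final_pds[unfolded Dl_def] final_srg[unfolded Dl_def] by blast
qed

end
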